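(* Let $(\mathfrak{n},J,\langle\cdot,\cdot\rangle)$ be a Hermitian Lie algebra with $\mathfrak{n}$ $2$-step nilpotent. Then $\langle\cdot,\cdot\rangle$ is pluriclosed if and only if $J$ is $2$-step and $$\langle[Jy,Jz],[w,u]\rangle-\langle[Ju,Jz],[w,y]\rangle+\langle[Ju,Jy],[w,z]\rangle+\langle[Jw,Jz],[u,y]\rangle-\langle[Jw,Jy],[u,z]\rangle+\langle[Jw,Ju],[y,z]\rangle=0$$ for all $w,u,y,z\in\mathfrak{n}$. In particular, if $J$ is abelian, let $\mathfrak{z}$ be the center, $\mathfrak{v}=\mathfrak{z}^\perp$ and $j:\mathfrak{z}\to\operatorname{End}(\mathfrak{v})$ defined by $\langle j(x)v,w\rangle=\langle x,[v,w]\rangle$ for $x\in\mathfrak{z}$, $v,w\in\mathfrak{v}$; then $\langle\cdot,\cdot\rangle$ is pluriclosed if and only if $j([u,y])z+j([y,z])u+j([z,u])y=0$ for all $u,y,z\in\mathfrak{v}$.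
   Context: A complex structure on a real Lie algebra $\mathfrak{g}$ is a linear map $J$ with $J^2=-I$ and $N_J(x,y)=[x,y]+J([Jx,y]+[x,Jy])-[Jx,Jy]=0$; it is abelian if $[Jx,Jy]=[x,y]$ for all $x,y$. Define $\mathfrak{a}_0(J)=0$, $\mathfrak{a}_\ell(J)=\{x: [x,\mathfrak{g}]\subset\mathfrak{a}_{\ell-1}(J),\ [Jx,\mathfrak{g}]\subset\mathfrak{a}_{\ell-1}(J)\}$; $J$ is $t$-step if $t$ is the least integer with $\mathfrak{a}_t(J)=\mathfrak{g}$. A Hermitian Lie algebra is $(\mathfrak{g},J,\langle\cdot,\cdot\rangle)$ with $\langle Jx,Jy\rangle=\langle x,y\rangle$. Torsion 3-form: $c(x,y,z)=-\langle[Jx,Jy],z\rangle-\langle[Jy,Jz],x\rangle-\langle[Jz,Jx],y\rangle$; $\langle\cdot,\cdot\rangle$ is pluriclosed if $dc=0$ for the Chevalley–Eilenberg differential $d$. $\mathfrak{n}$ is $2$-step nilpotent if non-abelian with $[\mathfrak{n},\mathfrak{n}]$ central. *)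

theory Defs
  imports "HOL-Analysis.Analysis"
begin

text \<open>A real Lie algebra structure on a finite-dimensional real inner product space
  (type of class euclidean_space); the Hermitian metric is the inner product of the type.\<close>

definition lie_algebra :: "('a::real_vector \<Rightarrow> 'a \<Rightarrow> 'a) \<Rightarrow> bool" where
  "lie_algebra br \<longleftrightarrow> bilinear br \<and> (\<forall>x. br x x = 0) \<and>
     (\<forall>x y z. br x (br y z) + br y (br z x) + br z (br x y) = 0)"

definition nijenhuis :: "('a::real_vector \<Rightarrow> 'a \<Rightarrow> 'a) \<Rightarrow> ('a \<Rightarrow> 'a) \<Rightarrow> 'a \<Rightarrow> 'a \<Rightarrow> 'a" where
  "nijenhuis br J x y = br x y + J (br (J x) y + br x (J y)) - br (J x) (J y)"

definition complex_structure :: "('a::real_vector \<Rightarrow> 'a \<Rightarrow> 'a) \<Rightarrow> ('a \<Rightarrow> 'a) \<Rightarrow> bool" where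
  "complex_structure br J \<longleftrightarrow> linear J \<and> (\<forall>x. J (J x) = - x) \<and>
     (\<forall>x y. nijenhuis br J x y = 0)"

definition abelian_cs :: "('a::real_vector \<Rightarrow> 'a \<Rightarrow> 'a) \<Rightarrow> ('a \<Rightarrow> 'a) \<Rightarrow> bool" where
  "abelian_cs br J \<longleftrightarrow> (\<forall>x y. br (J x) (J y) = br x y)"

fun acs :: "('a::real_vector \<Rightarrow> 'a \<Rightarrow> 'a) \<Rightarrow> ('a \<Rightarrow> 'a) \<Rightarrow> nat \<Rightarrow> 'a set" where
  "acs br J 0 = {0}"
| "acs br J (Suc l) = {x. (\<forall>y. br x y \<in> acs br J l) \<and> (\<forall>y. br (J x) y \<in> acs br J l)}"

definition t_step :: "('a::real_vector \<Rightarrow> 'a \<Rightarrow> 'a) \<Rightarrow> ('a \<Rightarrow> 'a) \<Rightarrow> nat \<Rightarrow> bool" where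
  "t_step br J t \<longleftrightarrow> acs br J t = UNIV \<and> (\<forall>s<t. acs br J s \<noteq> UNIV)"

definition hermitian :: "('a::real_inner \<Rightarrow> 'a) \<Rightarrow> bool" where
  "hermitian J \<longleftrightarrow> (\<forall>x y. inner (J x) (J y) = inner x y)"

definition torsion :: "('a::real_inner \<Rightarrow> 'a \<Rightarrow> 'a) \<Rightarrow> ('a \<Rightarrow> 'a) \<Rightarrow> 'a \<Rightarrow> 'a \<Rightarrow> 'a \<Rightarrow> real" where
  "torsion br J x y z = - inner (br (J x) (J y)) z - inner (br (J y) (J z)) x - inner (br (J z) (J x)) y"

text \<open>Chevalley--Eilenberg differential of a 3-form on a Lie algebra:
  (d c)(x0,x1,x2,x3) = sum over i<j of (-1)^(i+j) c([xi,xj], remaining in order).\<close>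
definition ce_d3 :: "('a \<Rightarrow> 'a \<Rightarrow> 'a) \<Rightarrow> ('a \<Rightarrow> 'a \<Rightarrow> 'a \<Rightarrow> real) \<Rightarrow> 'a \<Rightarrow> 'a \<Rightarrow> 'a \<Rightarrow> 'a \<Rightarrow> real" where
  "ce_d3 br c x0 x1 x2 x3 =
     - c (br x0 x1) x2 x3 + c (br x0 x2) x1 x3 - c (br x0 x3) x1 x2
     - c (br x1 x2) x0 x3 + c (br x1 x3) x0 x2 - c (br x2 x3) x0 x1"

definition pluriclosed :: "('a::real_inner \<Rightarrow> 'a \<Rightarrow> 'a) \<Rightarrow> ('a \<Rightarrow> 'a) \<Rightarrow> bool" where
  "pluriclosed br J \<longleftrightarrow> (\<forall>x0 x1 x2 x3. ce_d3 br (torsion br J) x0 x1 x2 x3 = 0)"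

definition two_step_nilpotent :: "('a::real_vector \<Rightarrow> 'a \<Rightarrow> 'a) \<Rightarrow> bool" where
  "two_step_nilpotent br \<longleftrightarrow> (\<exists>x y. br x y \<noteq> 0) \<and> (\<forall>x y z. br (br x y) z = 0)"

definition lie_center :: "('a::real_vector \<Rightarrow> 'a \<Rightarrow> 'a) \<Rightarrow> 'a set" where
  "lie_center br = {x. \<forall>y. br x y = 0}"

definition jmap :: "('a::real_inner \<Rightarrow> 'a \<Rightarrow> 'a) \<Rightarrow> 'a \<Rightarrow> 'a \<Rightarrow> 'a" where
  "jmap br x v = (THE u. u \<in> orthogonal_comp (lie_center br) \<and>
      (\<forall>w \<in> orthogonal_comp (lie_center br). inner u w = inner x (br v w)))"

end

theory Submission
  imports Defs
begin

locale hs =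
  fixes br :: "'a::euclidean_space \<Rightarrow> 'a \<Rightarrow> 'a" and J :: "'a \<Rightarrow> 'a"
  assumes bil: "bilinear br" and alt: "\<And>x. br x x = 0"
    and linJ: "linear J" and JJ: "\<And>x. J (J x) = - x"
    and nij: "\<And>x y. nijenhuis br J x y = 0"
    and herm: "\<And>x y. inner (J x) (J y) = inner x y"
    and nil: "\<And>x y z. br (br x y) z = 0"
begin

lemma ladd: "br (x + y) z = br x z + br y z" using bil by (rule bilinear_ladd)
lemma radd: "br x (y + z) = br x y + br x z" using bil by (rule bilinear_radd)
lemma lneg: "br (- x) z = - br x z" using bil by (rule bilinear_lneg)
lemma rneg: "br x (- z) = - br x z" using bil by (rule bilinear_rneg)
lemma lzero: "br 0 z = 0" using bil by (simp add: bilinear_lzero)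
lemma rzero: "br z 0 = 0" using bil by (simp add: bilinear_rzero)
lemma lmul: "br (c *\<^sub>R x) y = c *\<^sub>R br x y" using bil by (rule bilinear_lmul)

lemma anti: "br x y = - br y x"
proof -
  have "0 = br (x + y) (x + y)" using alt by simp
  also have "\<dots> = br x x + br x y + br y x + br y y" by (simp add: ladd radd)
  finally show ?thesis using alt by (simp add: eq_neg_iff_add_eq_0 add.commute)
qed

lemma nil2: "br z (br x y) = 0"
  by (subst anti) (simp add: nil)

lemma J0: "J 0 = 0" using linJ by (rule linear_0)
lemma Jneg: "J (- x) = - J x" using linJ by (rule linear_neg)

lemma K1:
  assumes "\<And>y. br s y = 0"
  shows "br (J s) (J y) = J (br (J s) y)"
proof -
  have "nijenhuis br J s y = 0" by (rule nij)
  then show ?thesis using assms by (simp add: nijenhuis_def J0)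
qed

lemma tors0: "torsion br J 0 y z = 0"
  by (simp add: torsion_def J0 lzero rzero)

lemma key:
  assumes pc: "pluriclosed br J" and s: "\<And>y. br s y = 0"
  shows "br (J s) t = 0"
proof -
  define d where "d = br (J s) t"
  have s': "\<And>y. br y s = 0" using s anti by (metis neg_equal_0_iff_equal)
  have Jd: "br (J s) (J t) = J d" unfolding d_def by (rule K1[OF s])
  have Jdc: "\<And>y. br (J d) y = 0" using Jd nil by metis
  have Jdc': "\<And>y. br y (J d) = 0" using Jdc anti by (metis neg_equal_0_iff_equal)
  have dc: "\<And>y. br d y = 0" unfolding d_def by (rule nil)
  have dc': "\<And>y. br y d = 0" unfolding d_def by (rule nil2)
  have t1: "torsion br J (br t (J s)) s (J t) = - inner d d"
  proof -
    have "br t (J s) = - d" unfolding d_def by (rule anti)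
    then show ?thesis
      by (simp add: torsion_def Jneg JJ lneg rneg Jdc Jdc' s s' flip: d_def)
  qed
  have t2: "torsion br J (br t (J t)) s (J s) = 0"
  proof -
    define e where "e = br t (J t)"
    have ec: "\<And>y. br e y = 0" unfolding e_def by (rule nil)
    have "br (J e) (J s) = J (br (J e) s)" by (rule K1[OF ec])
    then have "br (J e) (J s) = 0" using s' J0 by simp
    then show ?thesis unfolding e_def[symmetric]
      by (simp add: torsion_def JJ lneg rneg s s')
  qed
  have t3: "torsion br J (br (J s) (J t)) s t = - inner d d"
    unfolding Jd by (simp add: torsion_def JJ lneg rneg s s' dc dc' Jd herm)
  have "ce_d3 br (torsion br J) s t (J s) (J t) = 0" using pc by (simp add: pluriclosed_def)
  then have "2 * inner d d = 0"
    by (simp add: ce_d3_def s tors0 t1 t2 t3)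
  then have "d = 0" by simp
  then show ?thesis by (simp add: d_def)
qed


lemma pc_JC: assumes "pluriclosed br J" shows "br (J (br a b)) y = 0"
  by (rule key[OF assms nil])

lemma tors_br:
  assumes JC: "\<And>a b y. br (J (br a b)) y = 0"
  shows "torsion br J (br a b) y z = - inner (br (J y) (J z)) (br a b)"
proof -
  have "br (J z) (J (br a b)) = 0" using JC anti by (metis neg_equal_0_iff_equal)
  then show ?thesis by (simp add: torsion_def JC inner_commute)
qed

lemma dc_eq:
  assumes JC: "\<And>a b y. br (J (br a b)) y = 0"
  shows "ce_d3 br (torsion br J) w u y z =
              inner (br (J y) (J z)) (br w u) - inner (br (J u) (J z)) (br w y)
            + inner (br (J u) (J y)) (br w z) + inner (br (J w) (J z)) (br u y)
            - inner (br (J w) (J y)) (br u z) + inner (br (J w) (J u)) (br y z)"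
  by (simp add: ce_d3_def tors_br[OF JC])

lemma tstep:
  assumes ne: "\<exists>x y. br x y \<noteq> 0"
  shows "t_step br J 2 \<longleftrightarrow> (\<forall>a b y. br (J (br a b)) y = 0)"
proof
  assume "t_step br J 2"
  then have U: "acs br J (Suc (Suc 0)) = UNIV" by (simp add: t_step_def numeral_2_eq_2)
  show "\<forall>a b y. br (J (br a b)) y = 0"
  proof (intro allI)
    fix a b y
    have "a \<in> acs br J (Suc (Suc 0))" using U by simp
    then have "br a b \<in> acs br J (Suc 0)" by simp
    then show "br (J (br a b)) y = 0" by simp
  qed
next
  assume JC: "\<forall>a b y. br (J (br a b)) y = 0"
  obtain x0 y0 where xy: "br x0 y0 \<noteq> 0" using ne by blast
  have A2: "acs br J (Suc (Suc 0)) = UNIV" using JC by (auto simp: nil)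
  have A0: "acs br J 0 \<noteq> UNIV" using xy by auto
  have A1: "acs br J (Suc 0) \<noteq> UNIV" using xy by auto
  have "\<forall>s<2. acs br J s \<noteq> UNIV"
  proof (intro allI impI)
    fix s :: nat assume "s < 2"
    then have "s = 0 \<or> s = Suc 0" by auto
    then show "acs br J s \<noteq> UNIV" using A0 A1 by metis
  qed
  then show "t_step br J 2" using A2 by (simp add: t_step_def numeral_2_eq_2)
qed


abbreviation "Z \<equiv> lie_center br"
abbreviation "V \<equiv> orthogonal_comp (lie_center br)"

lemma subZ: "subspace Z"
  unfolding subspace_def lie_center_def by (auto simp: lzero ladd lmul)

lemma subV: "subspace V" by (rule subspace_orthogonal_comp)

lemma ZV: "c \<in> Z \<Longrightarrow> w \<in> V \<Longrightarrow> inner c w = 0"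
  by (auto simp: orthogonal_comp_def orthogonal_def)

lemma decomp: "\<exists>p c. p \<in> V \<and> c \<in> Z \<and> x = p + c"
proof -
  obtain y z where y: "y \<in> span Z" and z: "\<And>w. w \<in> span Z \<Longrightarrow> orthogonal z w"
    and e: "x = y + z" using orthogonal_subspace_decomp_exists[of Z x] by blast
  have sZ: "span Z = Z" using subZ by (simp add: span_eq_iff)
  have "z \<in> V" using z unfolding sZ orthogonal_comp_def
    by (auto simp: orthogonal_commute)
  then show ?thesis using y e sZ by (metis add.commute)
qed

lemma brZl: "c \<in> Z \<Longrightarrow> br (p + c) y = br p y"
  by (simp add: ladd lie_center_def)
lemma brZr: "c \<in> Z \<Longrightarrow> br y (p + c) = br y p"
  by (metis brZl anti)

lemma jm: "jmap br x v \<in> V \<and> (\<forall>w\<in>V. inner (jmap br x v) w = inner x (br v w))"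
  unfolding jmap_def
proof (rule theI')
  have lin: "linear (br v)" using bil by (simp add: bilinear_def)
  define r where "r = adjoint (br v) x"
  have r: "\<And>w. inner r w = inner x (br v w)"
    using adjoint_works[OF lin] unfolding r_def by (metis inner_commute)
  obtain p c where p: "p \<in> V" "c \<in> Z" "r = p + c" using decomp by blast
  have "\<forall>w\<in>V. inner p w = inner x (br v w)"
    using p r ZV by (metis add_cancel_right_right inner_add_left)
  then have ex: "\<exists>u. u \<in> V \<and> (\<forall>w\<in>V. inner u w = inner x (br v w))" using p by blast
  show "\<exists>!u. u \<in> V \<and> (\<forall>w\<in>V. inner u w = inner x (br v w))"
  proof (rule ex_ex1I[OF ex])
    fix u1 u2
    assume 1: "u1 \<in> V \<and> (\<forall>w\<in>V. inner u1 w = inner x (br v w))"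
      and 2: "u2 \<in> V \<and> (\<forall>w\<in>V. inner u2 w = inner x (br v w))"
    have d: "u1 - u2 \<in> V" using 1 2 subV by (simp add: subspace_diff)
    have "inner (u1 - u2) (u1 - u2) = 0" using 1 2 d by (simp add: inner_diff_left)
    then show "u1 = u2" by simp
  qed
qed

definition Phi where
  "Phi w u y z = inner (br y z) (br w u) - inner (br u z) (br w y) + inner (br u y) (br w z)"

lemma Phi_red:
  assumes "cw \<in> Z" "cu \<in> Z" "cy \<in> Z" "cz \<in> Z"
  shows "Phi (w + cw) (u + cu) (y + cy) (z + cz) = Phi w u y z"
  using assms by (simp add: Phi_def brZl brZr)

lemma inner_S:
  assumes "u \<in> V" "y \<in> V" "z \<in> V" "w \<in> V"
  shows "inner (jmap br (br u y) z + jmap br (br y z) u + jmap br (br z u) y) w = - Phi w u y z"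
proof -
  have "inner (jmap br (br u y) z + jmap br (br y z) u + jmap br (br z u) y) w
     = inner (br u y) (br z w) + inner (br y z) (br u w) + inner (br z u) (br y w)"
    using jm assms by (simp add: inner_add_left)
  also have "\<dots> = - Phi w u y z"
    using anti[of z w] anti[of u w] anti[of z u] anti[of y w]
    by (simp add: Phi_def)
  finally show ?thesis .
qed

lemma j_iff:
  "(\<forall>u \<in> V. \<forall>y \<in> V. \<forall>z \<in> V.
      jmap br (br u y) z + jmap br (br y z) u + jmap br (br z u) y = 0)
   \<longleftrightarrow> (\<forall>w u y z. Phi w u y z = 0)"
proof
  assume H: "\<forall>u \<in> V. \<forall>y \<in> V. \<forall>z \<in> V.
      jmap br (br u y) z + jmap br (br y z) u + jmap br (br z u) y = 0"
  show "\<forall>w u y z. Phi w u y z = 0"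
  proof (intro allI)
    fix w u y z
    obtain pw cw where w: "pw \<in> V" "cw \<in> Z" "w = pw + cw" using decomp by blast
    obtain pu cu where u: "pu \<in> V" "cu \<in> Z" "u = pu + cu" using decomp by blast
    obtain py cy where y: "py \<in> V" "cy \<in> Z" "y = py + cy" using decomp by blast
    obtain pz cz where z: "pz \<in> V" "cz \<in> Z" "z = pz + cz" using decomp by blast
    have "Phi w u y z = Phi pw pu py pz" using w u y z Phi_red by simp
    also have "\<dots> = - inner 0 pw" using inner_S[of pu py pz pw] H w u y z by simp
    finally show "Phi w u y z = 0" by simp
  qed
next
  assume H: "\<forall>w u y z. Phi w u y z = 0"
  show "\<forall>u \<in> V. \<forall>y \<in> V. \<forall>z \<in> V.
      jmap br (br u y) z + jmap br (br y z) u + jmap br (br z u) y = 0"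
  proof (intro ballI)
    fix u y z assume a: "u \<in> V" "y \<in> V" "z \<in> V"
    define S where "S = jmap br (br u y) z + jmap br (br y z) u + jmap br (br z u) y"
    have "S \<in> V" unfolding S_def using jm subV by (simp add: subspace_add)
    then have "inner S S = 0" using inner_S[OF a] H unfolding S_def by simp
    then show "jmap br (br u y) z + jmap br (br y z) u + jmap br (br z u) y = 0"
      unfolding S_def by simp
  qed
qed


lemma ab_JC:
  assumes ab: "abelian_cs br J" shows "br (J (br a b)) y = 0"
proof -
  have "br (J (br a b)) y = br (J (J (br a b))) (J y)" using ab by (simp add: abelian_cs_def)
  also have "\<dots> = 0" by (simp add: JJ lneg nil)
  finally show ?thesis .
qed

lemma ab_Delta:
  assumes ab: "abelian_cs br J"
  shows "inner (br (J y) (J z)) (br w u) - inner (br (J u) (J z)) (br w y)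
            + inner (br (J u) (J y)) (br w z) + inner (br (J w) (J z)) (br u y)
            - inner (br (J w) (J y)) (br u z) + inner (br (J w) (J u)) (br y z)
         = 2 * Phi w u y z"
  using ab by (simp add: abelian_cs_def Phi_def inner_commute)

end

theorem mainTheorem16:
  fixes br :: "'a::euclidean_space \<Rightarrow> 'a \<Rightarrow> 'a" and J :: "'a \<Rightarrow> 'a"
  assumes "lie_algebra br" and "complex_structure br J" and "hermitian J"
    and "two_step_nilpotent br"
  shows "(pluriclosed br J \<longleftrightarrow>
           t_step br J 2 \<and>
           (\<forall>w u y z.
              inner (br (J y) (J z)) (br w u) - inner (br (J u) (J z)) (br w y)
            + inner (br (J u) (J y)) (br w z) + inner (br (J w) (J z)) (br u y)
            - inner (br (J w) (J y)) (br u z) + inner (br (J w) (J u)) (br y z) = 0))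
       \<and> (abelian_cs br J \<longrightarrow>
           (pluriclosed br J \<longleftrightarrow>
             (\<forall>u \<in> orthogonal_comp (lie_center br). \<forall>y \<in> orthogonal_comp (lie_center br).
              \<forall>z \<in> orthogonal_comp (lie_center br).
                jmap br (br u y) z + jmap br (br y z) u + jmap br (br z u) y = 0)))"
proof -
  interpret hs br J
    using assms unfolding lie_algebra_def complex_structure_def hermitian_def two_step_nilpotent_def
    by (intro hs.intro) auto
  have ne: "\<exists>x y. br x y \<noteq> 0" using assms(4) by (simp add: two_step_nilpotent_def)
  have P1: "pluriclosed br J \<longleftrightarrow>
           t_step br J 2 \<and>
           (\<forall>w u y z.
              inner (br (J y) (J z)) (br w u) - inner (br (J u) (J z)) (br w y)
            + inner (br (J u) (J y)) (br w z) + inner (br (J w) (J z)) (br u y)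
            - inner (br (J w) (J y)) (br u z) + inner (br (J w) (J u)) (br y z) = 0)"
  proof
    assume pc: "pluriclosed br J"
    have JC: "\<And>a b y. br (J (br a b)) y = 0" using pc_JC[OF pc] .
    show "t_step br J 2 \<and> (\<forall>w u y z.
              inner (br (J y) (J z)) (br w u) - inner (br (J u) (J z)) (br w y)
            + inner (br (J u) (J y)) (br w z) + inner (br (J w) (J z)) (br u y)
            - inner (br (J w) (J y)) (br u z) + inner (br (J w) (J u)) (br y z) = 0)"
      using tstep[OF ne] JC dc_eq[OF JC] pc by (auto simp: pluriclosed_def)
  next
    assume H: "t_step br J 2 \<and> (\<forall>w u y z.
              inner (br (J y) (J z)) (br w u) - inner (br (J u) (J z)) (br w y)
            + inner (br (J u) (J y)) (br w z) + inner (br (J w) (J z)) (br u y)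
            - inner (br (J w) (J y)) (br u z) + inner (br (J w) (J u)) (br y z) = 0)"
    have JC: "\<And>a b y. br (J (br a b)) y = 0" using tstep[OF ne] H by blast
    show "pluriclosed br J" using H dc_eq[OF JC] by (simp add: pluriclosed_def)
  qed
  have P2: "abelian_cs br J \<longrightarrow>
           (pluriclosed br J \<longleftrightarrow>
             (\<forall>u \<in> orthogonal_comp (lie_center br). \<forall>y \<in> orthogonal_comp (lie_center br).
              \<forall>z \<in> orthogonal_comp (lie_center br).
                jmap br (br u y) z + jmap br (br y z) u + jmap br (br z u) y = 0))"
  proof
    assume ab: "abelian_cs br J"
    have JC: "\<And>a b y. br (J (br a b)) y = 0" using ab_JC[OF ab] .
    have T: "t_step br J 2" using tstep[OF ne] JC by blast
    show "pluriclosed br J \<longleftrightarrow>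
             (\<forall>u \<in> orthogonal_comp (lie_center br). \<forall>y \<in> orthogonal_comp (lie_center br).
              \<forall>z \<in> orthogonal_comp (lie_center br).
                jmap br (br u y) z + jmap br (br y z) u + jmap br (br z u) y = 0)"
      unfolding j_iff P1 using T ab_Delta[OF ab] by simp
  qed
  show ?thesis using P1 P2 by blast
qed

end
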